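(* Let $f(x)=\frac1n\sum_{i=1}^n f_i(x)$ where each $f_i:\mathbb{R}^d\to\mathbb{R}$ has Lipschitz continuous gradient with constant $L_{f,i}$, and let $M=\max_i L_{f,i}$ and $r=\frac{2}{1-c_2}$. In the First-Order Stochastic Trust-Region Method described in the context, if at iteration $k$ we have $g_k\neq 0$ and \[ \Delta_k\le\frac{\|g_k\|}{rM}, \] then $\Delta_{k+1}=\min(\nu_2\Delta_k,\bar\Delta)$.
   Context: First-Order Stochastic Trust-Region Method: parameters $\bar\Delta>0$, $\Delta_0\in(0,\bar\Delta)$, $0<c_0\le c_1\le c_2<1$, $\nu_1,\nu_2>1$. At iteration $k$: sample an index $i\in\{1,\dots,n\}$, set $g_k=\nabla f_i(x_k)$; $m_k(p)=g_k^\top p+\frac12\|p\|^2$; $p_k=\arg\min_{\|p\|\le\Delta_k}m_k(p)=-a_kg_k$ with $a_k=1$ if $\|g_k\|\le\Delta_k$ and $a_k=\Delta_k/\|g_k\|$ otherwise; $r_k=\frac{f_i(x_k)-f_i(x_k+p_k)}{m_k(0)-m_k(p_k)}$; $x_{k+1}=x_k+p_k$ if $r_k>c_0$, else $x_{k+1}=x_k$; $\Delta_{k+1}=\Delta_k/\nu_1$ if $r_k<c_1$, $\min(\nu_2\Delta_k,\bar\Delta)$ if $r_k>c_2$, $\Delta_k$ otherwise. *)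

theory Defs
  imports "HOL-Analysis.Analysis"
begin

definition is_gradient :: "('a::real_inner \<Rightarrow> real) \<Rightarrow> ('a \<Rightarrow> 'a) \<Rightarrow> bool" where
  "is_gradient h G \<longleftrightarrow> (\<forall>x. (h has_derivative (\<lambda>v. G x \<bullet> v)) (at x))"

definition tr_model :: "'a::real_inner \<Rightarrow> 'a \<Rightarrow> real" where
  "tr_model g p = g \<bullet> p + (1/2) * (norm p)^2"

definition tr_a :: "'a::real_normed_vector \<Rightarrow> real \<Rightarrow> real" where
  "tr_a g \<Delta> = (if norm g \<le> \<Delta> then 1 else \<Delta> / norm g)"

definition tr_step :: "'a::real_normed_vector \<Rightarrow> real \<Rightarrow> 'a" where
  "tr_step g \<Delta> = - (tr_a g \<Delta>) *\<^sub>R g"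

definition tr_ratio :: "('a::real_inner \<Rightarrow> real) \<Rightarrow> ('a \<Rightarrow> 'a) \<Rightarrow> 'a \<Rightarrow> real \<Rightarrow> real" where
  "tr_ratio fi Gi x \<Delta> =
     (let g = Gi x; p = tr_step g \<Delta>
      in (fi x - fi (x + p)) / (tr_model g 0 - tr_model g p))"

definition tr_update ::
  "real \<Rightarrow> real \<Rightarrow> real \<Rightarrow> real \<Rightarrow> real \<Rightarrow> real \<Rightarrow>
   ('a::real_inner \<Rightarrow> real) \<Rightarrow> ('a \<Rightarrow> 'a) \<Rightarrow> 'a \<times> real \<Rightarrow> 'a \<times> real" where
  "tr_update Dbar c0 c1 c2 nu1 nu2 fi Gi s =
     (let x = fst s; \<Delta> = snd s; g = Gi x; p = tr_step g \<Delta>; \<rho> = tr_ratio fi Gi x \<Delta>;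
          x' = (if \<rho> > c0 then x + p else x);
          \<Delta>' = (if \<rho> < c1 then \<Delta> / nu1 else if \<rho> > c2 then min (nu2 * \<Delta>) Dbar else \<Delta>)
      in (x', \<Delta>'))"

text \<open>The iterates \<open>(x_k, \<Delta>_k)\<close>: \<open>f i\<close> are the component functions, \<open>G i\<close> their gradients,
  \<open>idx k\<close> the index sampled at iteration \<open>k\<close>.\<close>
primrec tr_iter ::
  "real \<Rightarrow> real \<Rightarrow> real \<Rightarrow> real \<Rightarrow> real \<Rightarrow> real \<Rightarrow>
   (nat \<Rightarrow> 'a::real_inner \<Rightarrow> real) \<Rightarrow> (nat \<Rightarrow> 'a \<Rightarrow> 'a) \<Rightarrow> (nat \<Rightarrow> nat) \<Rightarrow>
   'a \<Rightarrow> real \<Rightarrow> nat \<Rightarrow> 'a \<times> real" where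
  "tr_iter Dbar c0 c1 c2 nu1 nu2 f G idx x0 D0 0 = (x0, D0)"
| "tr_iter Dbar c0 c1 c2 nu1 nu2 f G idx x0 D0 (Suc k) =
     tr_update Dbar c0 c1 c2 nu1 nu2 (f (idx k)) (G (idx k))
       (tr_iter Dbar c0 c1 c2 nu1 nu2 f G idx x0 D0 k)"

end

theory Submission
  imports Defs
begin

lemma descent:
  fixes h :: "'a::real_inner \<Rightarrow> real"
  assumes gr: "is_gradient h Gh" and lp: "L-lipschitz_on UNIV Gh"
  shows "h (x + p) \<le> h x + Gh x \<bullet> p + L/2 * (norm p)^2"
proof -
  define \<psi> where "\<psi> t = h x + t * (Gh x \<bullet> p) + L/2 * t^2 * (norm p)^2 - h (x + t *\<^sub>R p)" for t
  have hd: "((\<lambda>t. h (x + t *\<^sub>R p)) has_real_derivative (Gh (x + t *\<^sub>R p) \<bullet> p)) (at t)" for t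
  proof -
    have d1: "((\<lambda>t. x + t *\<^sub>R p) has_derivative (\<lambda>s. s *\<^sub>R p)) (at t)"
      by (auto intro!: derivative_eq_intros)
    have d2: "(h has_derivative (\<lambda>v. Gh (x + t *\<^sub>R p) \<bullet> v)) (at (x + t *\<^sub>R p))"
      using gr unfolding is_gradient_def by blast
    have "((\<lambda>t. h (x + t *\<^sub>R p)) has_derivative (\<lambda>s. Gh (x + t *\<^sub>R p) \<bullet> (s *\<^sub>R p))) (at t)"
      using has_derivative_compose[OF d1 d2] by (simp add: o_def)
    moreover have "(\<lambda>s. Gh (x + t *\<^sub>R p) \<bullet> (s *\<^sub>R p)) = (*) (Gh (x + t *\<^sub>R p) \<bullet> p)"
      by (auto simp: algebra_simps)
    ultimately show ?thesis by (simp add: has_field_derivative_def)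
  qed
  have dpsi: "(\<psi> has_real_derivative (Gh x \<bullet> p + L * t * (norm p)^2 - Gh (x + t *\<^sub>R p) \<bullet> p)) (at t)" for t
    unfolding \<psi>_def
    by (rule hd derivative_eq_intros refl | simp)+
  have nn: "0 \<le> Gh x \<bullet> p + L * t * (norm p)^2 - Gh (x + t *\<^sub>R p) \<bullet> p" if "t \<in> {0..1}" for t
  proof -
    have "(Gh (x + t *\<^sub>R p) - Gh x) \<bullet> p \<le> norm (Gh (x + t *\<^sub>R p) - Gh x) * norm p"
      by (rule norm_cauchy_schwarz)
    also have "\<dots> \<le> (L * norm (t *\<^sub>R p)) * norm p"
      using lipschitz_on_normD[OF lp, of "x + t *\<^sub>R p" x] by (simp add: mult_right_mono)
    also have "\<dots> = L * t * (norm p)^2" using that by (simp add: power2_eq_square)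
    finally show ?thesis by (simp add: inner_diff_left)
  qed
  have "\<psi> 0 \<le> \<psi> 1"
    by (rule deriv_nonneg_imp_mono[OF dpsi nn]) auto
  then show ?thesis by (simp add: \<psi>_def)
qed

lemma pos_delta:
  assumes "0 < D0" "nu1 > 1" "nu2 > 1" "Dbar > 0"
  shows "snd (tr_iter Dbar c0 c1 c2 nu1 nu2 f G idx x0 D0 k) > 0"
  using assms by (induction k) (auto simp: tr_update_def Let_def)

theorem lemma4p4:
  fixes f :: "nat \<Rightarrow> 'a::euclidean_space \<Rightarrow> real"
    and G :: "nat \<Rightarrow> 'a \<Rightarrow> 'a"
    and L :: "nat \<Rightarrow> real"
    and n :: nat
    and idx :: "nat \<Rightarrow> nat"
    and x0 :: 'a
    and Dbar D0 c0 c1 c2 nu1 nu2 :: real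
    and k :: nat
  assumes n: "n \<ge> 1"
    and grad: "\<And>i. i \<in> {1..n} \<Longrightarrow> is_gradient (f i) (G i)"
    and lip: "\<And>i. i \<in> {1..n} \<Longrightarrow> (L i)-lipschitz_on UNIV (G i)"
    and samp: "\<And>j. idx j \<in> {1..n}"
    and Dbar: "Dbar > 0"
    and D0: "0 < D0" "D0 < Dbar"
    and c: "0 < c0" "c0 \<le> c1" "c1 \<le> c2" "c2 < 1"
    and nu: "nu1 > 1" "nu2 > 1"
    and gk: "G (idx k) (fst (tr_iter Dbar c0 c1 c2 nu1 nu2 f G idx x0 D0 k)) \<noteq> 0"
    and Dk: "snd (tr_iter Dbar c0 c1 c2 nu1 nu2 f G idx x0 D0 k)
               * (2 / (1 - c2)) * Max (L ` {1..n})
             \<le> norm (G (idx k) (fst (tr_iter Dbar c0 c1 c2 nu1 nu2 f G idx x0 D0 k)))"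
  shows "snd (tr_iter Dbar c0 c1 c2 nu1 nu2 f G idx x0 D0 (Suc k))
         = min (nu2 * snd (tr_iter Dbar c0 c1 c2 nu1 nu2 f G idx x0 D0 k)) Dbar"
  proof -
  define s where "s = tr_iter Dbar c0 c1 c2 nu1 nu2 f G idx x0 D0 k"
  define x where "x = fst s"
  define \<Delta> where "\<Delta> = snd s"
  define i where "i = idx k"
  define g where "g = G i x"
  define M where "M = Max (L ` {1..n})"
  define a where "a = tr_a g \<Delta>"
  define p where "p = tr_step g \<Delta>"
  have iin: "i \<in> {1..n}" using samp i_def by blast
  have Dpos: "\<Delta> > 0" unfolding \<Delta>_def s_def using pos_delta D0 nu Dbar by blast
  have gnz: "g \<noteq> 0" using gk unfolding g_def x_def s_def i_def .
  have ngp: "norm g > 0" using gnz by simp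
  have LM: "L i \<le> M" unfolding M_def using iin by (intro Max_ge) auto
  have L0: "0 \<le> L i" using lipschitz_on_nonneg[OF lip[OF iin]] .
  have rpos: "2 / (1 - c2) > 0" using c by simp
  have Dk': "\<Delta> * (2 / (1 - c2)) * M \<le> norm g"
    using Dk unfolding \<Delta>_def M_def g_def x_def s_def i_def .
  have MD: "M * \<Delta> \<le> norm g * ((1 - c2) / 2)"
  proof -
    have "M * \<Delta> * (2 / (1 - c2)) \<le> norm g" using Dk' by (simp add: ac_simps)
    hence "M * \<Delta> * (2 / (1 - c2)) * ((1 - c2) / 2) \<le> norm g * ((1 - c2) / 2)"
      using c by (intro mult_right_mono) auto
    thus ?thesis using c by simp
  qed
  have a_pos: "0 < a" and a_le: "a \<le> 1" and La: "L i * a \<le> (1 - c2) / 2"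
  proof -
    have "0 < a \<and> a \<le> 1 \<and> L i * a \<le> (1 - c2) / 2"
    proof (cases "norm g \<le> \<Delta>")
      case True
      hence a1: "a = 1" by (simp add: a_def tr_a_def)
      have "M * \<Delta> \<le> \<Delta> * ((1 - c2) / 2)"
      proof -
        have "norm g * ((1 - c2) / 2) \<le> \<Delta> * ((1 - c2) / 2)"
          using True c by (intro mult_right_mono) auto
        thus ?thesis using MD by linarith
      qed
      hence "M \<le> (1 - c2) / 2" using Dpos by (simp add: mult.commute)
      thus ?thesis using a1 LM by simp
    next
      case False
      hence a1: "a = \<Delta> / norm g" by (simp add: a_def tr_a_def)
      have "L i * \<Delta> \<le> M * \<Delta>" using LM Dpos by simp
      hence "L i * \<Delta> \<le> norm g * ((1 - c2) / 2)" using MD by linarith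
      hence "L i * \<Delta> / norm g \<le> (1 - c2) / 2" using ngp by (simp add: divide_simps mult.commute)
      thus ?thesis using a1 False Dpos ngp by auto
    qed
    thus "0 < a" "a \<le> 1" "L i * a \<le> (1 - c2) / 2" by auto
  qed
  have pdef: "p = - a *\<^sub>R g" by (simp add: p_def tr_step_def a_def)
  have gp: "g \<bullet> p = - a * (norm g)^2" by (simp add: pdef power2_norm_eq_inner)
  have np1: "norm p = a * norm g" using a_pos by (simp add: pdef)
  have np: "(norm p)^2 = a^2 * (norm g)^2" using a_pos by (simp add: pdef power_mult_distrib)
  have desc: "f i (x + p) \<le> f i x + g \<bullet> p + L i / 2 * (norm p)^2"
    unfolding g_def by (rule descent[OF grad[OF iin] lip[OF iin]])
  define N where "N = f i x - f i (x + p)"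
  define Dn where "Dn = tr_model g 0 - tr_model g p"
  have Dn_eq: "Dn = a * (norm g)^2 * (1 - a / 2)"
    by (simp add: Dn_def tr_model_def gp np1 power2_eq_square algebra_simps)
  have Dn_pos: "Dn > 0" using a_pos a_le ngp by (simp add: Dn_eq)
  have N_ge: "N \<ge> a * (norm g)^2 * (1 - L i * a / 2)"
    using desc by (simp add: N_def gp np1 power2_eq_square algebra_simps)
  have "(1 - L i * a / 2) - c2 * (1 - a / 2) > 0"
  proof -
    have "1 - L i * a / 2 \<ge> 1 - (1 - c2) / 4" using La by (simp add: mult.commute)
    moreover have "c2 * (1 - a / 2) \<le> c2" using c a_pos by simp
    moreover have "1 - (1 - c2) / 4 > c2" using c(4) by (simp add: field_simps)
    ultimately show ?thesis by linarith
  qed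
  hence "a * (norm g)^2 * ((1 - L i * a / 2) - c2 * (1 - a / 2)) > 0"
    using a_pos ngp by simp
  hence "N > c2 * Dn" using N_ge by (simp add: Dn_eq algebra_simps)
  hence rho: "N / Dn > c2" using Dn_pos by (simp add: divide_simps)
  have ratio: "tr_ratio (f i) (G i) x \<Delta> = N / Dn"
    by (simp add: tr_ratio_def Let_def N_def Dn_def p_def g_def)
  have "tr_iter Dbar c0 c1 c2 nu1 nu2 f G idx x0 D0 (Suc k)
        = tr_update Dbar c0 c1 c2 nu1 nu2 (f i) (G i) s" by (simp add: s_def i_def)
  hence "snd (tr_iter Dbar c0 c1 c2 nu1 nu2 f G idx x0 D0 (Suc k)) = min (nu2 * \<Delta>) Dbar"
    using rho c ratio by (simp add: tr_update_def Let_def x_def \<Delta>_def)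
  thus ?thesis by (simp add: \<Delta>_def s_def)
qed

end
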